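(* In the setting below, suppose there is a reparametrization $\eta=\eta(\theta)$ of $\Theta$ (a twice differentiable map with twice differentiable inverse) such that for every $\theta\in\Theta$ and all $k,l$ the quantity $$\frac{\partial^2}{\partial\eta^k\partial\eta^l}f(m_\theta(a))$$ does not depend on $a\in A$. Then for all $\theta$, all $x\in{\cal F}_\theta$ and all $k,l$, $\sum_a[x(a)-m_\theta(a)]\frac{\partial^2}{\partial\theta^k\partial\theta^l}f(m_\theta(a))=0$; consequently the model belongs to a generalized exponential family, with Fisher information $I_{k,l}(\theta)=\sum_af'(m_\theta(a))\frac{\partial m_\theta(a)}{\partial\theta^k}\frac{\partial m_\theta(a)}{\partial\theta^l}$.
   Context: Setting: $A$ is a finite alphabet, ${\mathbb X}$ the set of probability distributions on $A$ with strictly positive entries, $\langle x|q\rangle=\sum_a x(a)q(a)$. $F:(0,1]\to{\mathbb R}$ is strictly convex and twice differentiable with $f=F'$. $\theta\in\Theta\mapsto m_\theta\in{\mathbb X}$ ($\Theta\subset{\mathbb R}^n$ open) is injective with $\theta\mapsto m_\theta(a)$ twice differentiable for each $a$. The Bregman divergence is $D(x\|\theta)=\sum_a[F(x(a))-F(m_\theta(a))-(x(a)-m_\theta(a))f(m_\theta(a))]$; it is assumed that for every $x\in{\mathbb X}$, $\theta\mapsto D(x\|\theta)$ has a unique minimizer $\theta(x)\in\Theta$, $\mu(x)=m_{\theta(x)}$, and ${\cal F}_\theta=\{x:\mu(x)=m_\theta\}$. The generalized Fisher information is $I_{k,l}(x)=\frac{\partial^2}{\partial\theta^k\partial\theta^l}D(x\|\theta)\big|_{m_\theta=\mu(x)}$,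 and the model belongs to a generalized exponential family if $I_{k,l}$ is constant on each fiber ${\cal F}_\theta$. *)

theory Defs
  imports "HOL-Analysis.Analysis"
begin

definition strict_convex_on :: "real set \<Rightarrow> (real \<Rightarrow> real) \<Rightarrow> bool" where
  "strict_convex_on S F \<longleftrightarrow> convex S \<and> (\<forall>x\<in>S. \<forall>y\<in>S. \<forall>u. x \<noteq> y \<longrightarrow> 0 < u \<longrightarrow> u < 1 \<longrightarrow>
      F (u * x + (1 - u) * y) < u * F x + (1 - u) * F y)"

text \<open>Parameters live in real^'n (Theta is a subset of R^n); the alphabet A is a finite type 'a.\<close>

definition partial :: "'n::finite \<Rightarrow> (real^'n \<Rightarrow> real) \<Rightarrow> real^'n \<Rightarrow> real" where
  "partial k g x = deriv (\<lambda>t. g (x + t *\<^sub>R axis k 1)) 0"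

definition twice_diff_on :: "(real^'n::finite \<Rightarrow> real) \<Rightarrow> (real^'n) set \<Rightarrow> bool" where
  "twice_diff_on g S \<longleftrightarrow> g differentiable_on S \<and> (\<forall>k. partial k g differentiable_on S)"

definition prob_simplex :: "('a::finite \<Rightarrow> real) set" where
  "prob_simplex = {x. (\<forall>a. 0 < x a) \<and> (\<Sum>a\<in>UNIV. x a) = 1}"

definition bregman_div ::
  "(real \<Rightarrow> real) \<Rightarrow> (real \<Rightarrow> real) \<Rightarrow> (real^'n::finite \<Rightarrow> 'a::finite \<Rightarrow> real)
     \<Rightarrow> ('a \<Rightarrow> real) \<Rightarrow> real^'n \<Rightarrow> real" where
  "bregman_div F f m x \<theta> =
     (\<Sum>a\<in>UNIV. F (x a) - F (m \<theta> a) - (x a - m \<theta> a) * f (m \<theta> a))"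

definition min_param ::
  "(real \<Rightarrow> real) \<Rightarrow> (real \<Rightarrow> real) \<Rightarrow> (real^'n::finite \<Rightarrow> 'a::finite \<Rightarrow> real)
     \<Rightarrow> (real^'n) set \<Rightarrow> ('a \<Rightarrow> real) \<Rightarrow> real^'n" where
  "min_param F f m \<Theta> x =
     (THE \<theta>. \<theta> \<in> \<Theta> \<and> (\<forall>\<theta>'\<in>\<Theta>. bregman_div F f m x \<theta> \<le> bregman_div F f m x \<theta>'))"

definition fiber ::
  "(real \<Rightarrow> real) \<Rightarrow> (real \<Rightarrow> real) \<Rightarrow> (real^'n::finite \<Rightarrow> 'a::finite \<Rightarrow> real)
     \<Rightarrow> (real^'n) set \<Rightarrow> real^'n \<Rightarrow> ('a \<Rightarrow> real) set" where
  "fiber F f m \<Theta> \<theta> = {x \<in> prob_simplex. m (min_param F f m \<Theta> x) = m \<theta>}"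

definition fisher_info ::
  "(real \<Rightarrow> real) \<Rightarrow> (real \<Rightarrow> real) \<Rightarrow> (real^'n::finite \<Rightarrow> 'a::finite \<Rightarrow> real)
     \<Rightarrow> (real^'n) set \<Rightarrow> 'n \<Rightarrow> 'n \<Rightarrow> ('a \<Rightarrow> real) \<Rightarrow> real" where
  "fisher_info F f m \<Theta> k l x =
     partial k (partial l (bregman_div F f m x)) (min_param F f m \<Theta> x)"

definition gen_exp_family ::
  "(real \<Rightarrow> real) \<Rightarrow> (real \<Rightarrow> real) \<Rightarrow> (real^'n::finite \<Rightarrow> 'a::finite \<Rightarrow> real)
     \<Rightarrow> (real^'n) set \<Rightarrow> bool" where
  "gen_exp_family F f m \<Theta> \<longleftrightarrow>
     (\<forall>\<theta>\<in>\<Theta>. \<forall>k l. \<forall>x\<in>fiber F f m \<Theta> \<theta>. \<forall>y\<in>fiber F f m \<Theta> \<theta>.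
        fisher_info F f m \<Theta> k l x = fisher_info F f m \<Theta> k l y)"

end

theory Submission imports Defs begin

lemma vec_sum_axis: "(\<Sum>i\<in>UNIV. (v $ i) *\<^sub>R axis i (1::real)) = (v :: real^'n::finite)"
  by (simp add: vec_eq_iff sum_component axis_def if_distrib[of "\<lambda>z. _ * z"] cong: if_cong)

lemma VEC:
  fixes f :: "'b::real_normed_vector \<Rightarrow> real^'n::finite"
  assumes "\<And>i. ((\<lambda>x. f x $ i) has_derivative D i) F"
  shows "(f has_derivative (\<lambda>v. \<Sum>i\<in>UNIV. D i v *\<^sub>R axis i 1)) F"
proof -
  have "((\<lambda>x. \<Sum>i\<in>UNIV. (f x $ i) *\<^sub>R axis i (1::real)) has_derivative (\<lambda>v. \<Sum>i\<in>UNIV. D i v *\<^sub>R axis i 1)) F"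
    by (intro has_derivative_sum has_derivative_scaleR_left assms)
  thus ?thesis by (simp add: vec_sum_axis)
qed

lemma partial_eqI:
  "((\<lambda>t. h (x + t *\<^sub>R axis k 1)) has_real_derivative D) (at 0) \<Longrightarrow> partial k h x = D"
  by (simp add: partial_def DERIV_imp_deriv)

lemma line_has_deriv:
  fixes h :: "real^'n::finite \<Rightarrow> real"
  assumes "(h has_derivative H) (at x)"
  shows "((\<lambda>t. h (x + t *\<^sub>R axis k 1)) has_real_derivative H (axis k 1)) (at 0)"
    and "partial k h x = H (axis k 1)"
proof -
  have l: "((\<lambda>t. x + t *\<^sub>R axis k 1) has_derivative (\<lambda>t. t *\<^sub>R axis k 1)) (at 0)"
    by (auto intro!: derivative_eq_intros)
  have "((\<lambda>t. h (x + t *\<^sub>R axis k 1)) has_derivative (\<lambda>t. H (t *\<^sub>R axis k 1))) (at 0)"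
    using has_derivative_compose[OF l, of h H] assms by simp
  moreover have "(\<lambda>t. H (t *\<^sub>R axis k 1)) = (*) (H (axis k 1))"
    using has_derivative_linear[OF assms] by (auto simp: linear_scale)
  ultimately show *: "((\<lambda>t. h (x + t *\<^sub>R axis k 1)) has_real_derivative H (axis k 1)) (at 0)"
    by (simp add: has_field_derivative_def)
  show "partial k h x = H (axis k 1)" using partial_eqI[OF *] .
qed

lemma line_deriv:
  fixes h :: "real^'n::finite \<Rightarrow> real"
  assumes "h differentiable at x"
  shows "((\<lambda>t. h (x + t *\<^sub>R axis k 1)) has_real_derivative partial k h x) (at 0)"
  using assms line_has_deriv unfolding differentiable_def by metis

lemma open_line:
  assumes "open (S :: (real^'n::finite) set)"
  shows "open {t::real. x + t *\<^sub>R axis k 1 \<in> S}"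
proof -
  have "open ((\<lambda>t::real. x + t *\<^sub>R axis k 1) -` S)"
    by (rule continuous_open_vimage[OF assms]) (auto intro!: continuous_intros)
  thus ?thesis by (simp add: vimage_def)
qed

lemma partial_local:
  assumes "open S" "x \<in> S" "\<And>y. y \<in> S \<Longrightarrow> h1 y = h2 y"
  shows "partial k h1 x = partial k h2 x"
proof -
  have "eventually (\<lambda>t. x + t *\<^sub>R axis k 1 \<in> S) (nhds (0::real))"
    using eventually_nhds_in_open[OF open_line[OF assms(1), of x k], of 0] assms(2) by simp
  hence "eventually (\<lambda>t. h1 (x + t *\<^sub>R axis k 1) = h2 (x + t *\<^sub>R axis k 1)) (nhds (0::real))"
    by eventually_elim (use assms(3) in auto)
  thus ?thesis unfolding partial_def by (intro deriv_cong_ev) auto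
qed

lemma chain:
  fixes g :: "real^'n::finite \<Rightarrow> real" and \<eta> :: "real^'m::finite \<Rightarrow> real^'n"
  assumes "\<And>i. (\<lambda>y. \<eta> y $ i) differentiable at x" "g differentiable at (\<eta> x)"
  shows "((\<lambda>t. g (\<eta> (x + t *\<^sub>R axis l 1))) has_real_derivative
           (\<Sum>i\<in>UNIV. partial i g (\<eta> x) * partial l (\<lambda>y. \<eta> y $ i) x)) (at 0)"
    and "(\<lambda>y. g (\<eta> y)) differentiable at x"
proof -
  obtain D where D: "\<And>i. ((\<lambda>y. \<eta> y $ i) has_derivative D i) (at x)"
    using assms(1) unfolding differentiable_def by metis
  obtain G where G: "(g has_derivative G) (at (\<eta> x))"
    using assms(2) unfolding differentiable_def by metis
  have E: "(\<eta> has_derivative (\<lambda>v. \<Sum>i\<in>UNIV. D i v *\<^sub>R axis i 1)) (at x)"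
    by (rule VEC[OF D])
  have C: "((\<lambda>y. g (\<eta> y)) has_derivative (\<lambda>v. G (\<Sum>i\<in>UNIV. D i v *\<^sub>R axis i 1))) (at x)"
    using has_derivative_compose[OF E G] .
  thus "(\<lambda>y. g (\<eta> y)) differentiable at x" unfolding differentiable_def by blast
  have lin: "linear G" using has_derivative_linear[OF G] .
  have "G (\<Sum>i\<in>UNIV. D i (axis l 1) *\<^sub>R axis i 1) = (\<Sum>i\<in>UNIV. D i (axis l 1) * G (axis i 1))"
    using lin by (simp add: linear_sum linear_scale)
  also have "\<dots> = (\<Sum>i\<in>UNIV. partial i g (\<eta> x) * partial l (\<lambda>y. \<eta> y $ i) x)"
    using line_has_deriv(2)[OF G] line_has_deriv(2)[OF D] by (simp add: mult.commute)
  finally show "((\<lambda>t. g (\<eta> (x + t *\<^sub>R axis l 1))) has_real_derivative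
           (\<Sum>i\<in>UNIV. partial i g (\<eta> x) * partial l (\<lambda>y. \<eta> y $ i) x)) (at 0)"
    using line_has_deriv(1)[OF C, of l] by simp
qed

lemma comp_within:
  fixes g :: "real^'n::finite \<Rightarrow> real"
  assumes FD: "\<forall>t\<in>{0<..1}. (F has_real_derivative f t) (at t within {0<..1})"
    and "open \<Theta>" "\<theta> \<in> \<Theta>" "\<forall>y\<in>\<Theta>. g y \<in> {0<..1}" "g differentiable at \<theta>"
  shows "((\<lambda>t. F (g (\<theta> + t *\<^sub>R axis j 1))) has_real_derivative f (g \<theta>) * partial j g \<theta>) (at 0)"
proof -
  define s where "s = {t::real. \<theta> + t *\<^sub>R axis j 1 \<in> \<Theta>}"
  define u where "u = (\<lambda>t::real. g (\<theta> + t *\<^sub>R axis j 1))"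
  have so: "open s" unfolding s_def by (rule open_line[OF assms(2)])
  have s0: "0 \<in> s" using assms(3) by (simp add: s_def)
  have u0: "u 0 = g \<theta>" by (simp add: u_def)
  have us: "u ` s \<subseteq> {0<..1}" using assms(4) by (auto simp: s_def u_def)
  have du: "(u has_real_derivative partial j g \<theta>) (at 0 within s)"
    using line_deriv[OF assms(5), of j] by (simp add: u_def has_field_derivative_at_within)
  have dF: "(F has_real_derivative f (g \<theta>)) (at (u 0) within u ` s)"
    using FD assms(3,4) us u0 by (metis has_field_derivative_subset)
  have "(F \<circ> u has_real_derivative f (g \<theta>) * partial j g \<theta>) (at 0 within s)"
    by (rule DERIV_image_chain[OF dF du])
  thus ?thesis using at_within_open[OF s0 so] by (simp add: u_def o_def)
qed

lemma differentiable_transform_open: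
  assumes "f differentiable at x" "open S" "x \<in> S" "\<And>y. y \<in> S \<Longrightarrow> f y = g y"
  shows "g differentiable at x"
  using assms has_derivative_transform_within_open unfolding differentiable_def by metis

theorem mainTheorem7:
  fixes F f f' :: "real \<Rightarrow> real"
    and m :: "real^'n::finite \<Rightarrow> 'a::finite \<Rightarrow> real"
    and \<Theta> :: "(real^'n) set"
    and \<eta> \<psi> :: "real^'n \<Rightarrow> real^'n"
  assumes F_convex: "strict_convex_on {0<..1} F"
    and F_deriv: "\<forall>t\<in>{0<..1}. (F has_real_derivative f t) (at t within {0<..1})"
    and f_deriv: "\<forall>t\<in>{0<..1}. (f has_real_derivative f' t) (at t within {0<..1})"
    and Theta_open: "open \<Theta>"
    and m_inj: "inj_on m \<Theta>"
    and m_in: "\<forall>\<theta>\<in>\<Theta>. m \<theta> \<in> prob_simplex"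
    and m_smooth: "\<forall>a. twice_diff_on (\<lambda>\<theta>. m \<theta> a) \<Theta>"
    and unique_min: "\<forall>x\<in>prob_simplex. \<exists>!\<theta>. \<theta> \<in> \<Theta> \<and>
                        (\<forall>\<theta>'\<in>\<Theta>. bregman_div F f m x \<theta> \<le> bregman_div F f m x \<theta>')"
    and fm_smooth: "\<forall>a. twice_diff_on (\<lambda>\<theta>. f (m \<theta> a)) \<Theta>"
    and eta_open: "open (\<eta> ` \<Theta>)"
    and psi_eta: "\<forall>\<theta>\<in>\<Theta>. \<psi> (\<eta> \<theta>) = \<theta>"
    and eta_smooth: "\<forall>i. twice_diff_on (\<lambda>\<theta>. \<eta> \<theta> $ i) \<Theta>"
    and psi_smooth: "\<forall>i. twice_diff_on (\<lambda>e. \<psi> e $ i) (\<eta> ` \<Theta>)"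
    and indep: "\<forall>\<theta>\<in>\<Theta>. \<forall>k l. \<exists>c. \<forall>a.
                  partial k (partial l (\<lambda>e. f (m (\<psi> e) a))) (\<eta> \<theta>) = c"
  shows "(\<forall>\<theta>\<in>\<Theta>. \<forall>x\<in>fiber F f m \<Theta> \<theta>. \<forall>k l.
            (\<Sum>a\<in>UNIV. (x a - m \<theta> a) * partial k (partial l (\<lambda>\<theta>. f (m \<theta> a))) \<theta>) = 0)
       \<and> gen_exp_family F f m \<Theta>
       \<and> (\<forall>\<theta>\<in>\<Theta>. \<forall>x\<in>fiber F f m \<Theta> \<theta>. \<forall>k l.
            fisher_info F f m \<Theta> k l x =
              (\<Sum>a\<in>UNIV. f' (m \<theta> a) * partial k (\<lambda>\<theta>. m \<theta> a) \<theta> * partial l (\<lambda>\<theta>. m \<theta> a) \<theta>))"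
proof -
  define \<phi> where "\<phi> a = (\<lambda>\<theta>. f (m \<theta> a))" for a
  define G where "G a = (\<lambda>e. f (m (\<psi> e) a))" for a
  have Th_at: "\<And>h y. h differentiable_on \<Theta> \<Longrightarrow> y \<in> \<Theta> \<Longrightarrow> h differentiable at y"
    using differentiable_on_eq_differentiable_at[OF Theta_open] by blast
  have E_at: "\<And>h y. h differentiable_on (\<eta> ` \<Theta>) \<Longrightarrow> y \<in> \<eta> ` \<Theta> \<Longrightarrow> h differentiable at y"
    using differentiable_on_eq_differentiable_at[OF eta_open] by blast
  have m_d: "\<And>a y. y \<in> \<Theta> \<Longrightarrow> (\<lambda>\<theta>. m \<theta> a) differentiable at y"
    and m_d2: "\<And>a k y. y \<in> \<Theta> \<Longrightarrow> partial k (\<lambda>\<theta>. m \<theta> a) differentiable at y"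
    using m_smooth Th_at unfolding twice_diff_on_def by blast+
  have phi_d: "\<And>a y. y \<in> \<Theta> \<Longrightarrow> \<phi> a differentiable at y"
    and phi_d2: "\<And>a k y. y \<in> \<Theta> \<Longrightarrow> partial k (\<phi> a) differentiable at y"
    using fm_smooth Th_at unfolding twice_diff_on_def \<phi>_def by blast+
  have eta_d: "\<And>i y. y \<in> \<Theta> \<Longrightarrow> (\<lambda>\<theta>. \<eta> \<theta> $ i) differentiable at y"
    and eta_d2: "\<And>i k y. y \<in> \<Theta> \<Longrightarrow> partial k (\<lambda>\<theta>. \<eta> \<theta> $ i) differentiable at y"
    using eta_smooth Th_at unfolding twice_diff_on_def by blast+
  have psi_d: "\<And>i y. y \<in> \<eta> ` \<Theta> \<Longrightarrow> (\<lambda>e. \<psi> e $ i) differentiable at y"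
    and psi_d2: "\<And>i k y. y \<in> \<eta> ` \<Theta> \<Longrightarrow> partial k (\<lambda>e. \<psi> e $ i) differentiable at y"
    using psi_smooth E_at unfolding twice_diff_on_def by blast+
  have m_range: "\<And>a y. y \<in> \<Theta> \<Longrightarrow> m y a \<in> {0<..1}"
  proof -
    fix a y assume "y \<in> \<Theta>"
    hence "m y \<in> prob_simplex" using m_in by blast
    hence p: "\<forall>b. 0 < m y b" and s: "(\<Sum>b\<in>UNIV. m y b) = 1" by (auto simp: prob_simplex_def)
    have "m y a \<le> (\<Sum>b\<in>UNIV. m y b)" by (rule member_le_sum) (use p in \<open>auto intro: less_imp_le\<close>)
    thus "m y a \<in> {0<..1}" using p s by auto
  qed
  have psi_in: "\<And>e. e \<in> \<eta> ` \<Theta> \<Longrightarrow> \<psi> e \<in> \<Theta>" using psi_eta by auto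
  have G_d: "\<And>a e. e \<in> \<eta> ` \<Theta> \<Longrightarrow> G a differentiable at e"
    unfolding G_def using chain(2)[of \<psi> _ "\<phi> _"] psi_d phi_d psi_in unfolding \<phi>_def by blast
  have G1: "\<And>a i e. e \<in> \<eta> ` \<Theta> \<Longrightarrow> partial i (G a) e =
      (\<Sum>j\<in>UNIV. partial j (\<phi> a) (\<psi> e) * partial i (\<lambda>y. \<psi> y $ j) e)"
  proof -
    fix a i e assume e: "e \<in> \<eta> ` \<Theta>"
    have "G a = (\<lambda>y. \<phi> a (\<psi> y))" by (simp add: G_def \<phi>_def)
    thus "?thesis a i e"
      using partial_eqI[OF chain(1)[of \<psi> e "\<phi> a" i]] psi_d[OF e] phi_d[OF psi_in[OF e]] by simp
  qed
  have G1_d: "\<And>a i e. e \<in> \<eta> ` \<Theta> \<Longrightarrow> partial i (G a) differentiable at e"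
  proof -
    fix a i e assume e: "e \<in> \<eta> ` \<Theta>"
    have "(\<lambda>e. \<Sum>j\<in>UNIV. partial j (\<phi> a) (\<psi> e) * partial i (\<lambda>y. \<psi> y $ j) e) differentiable at e"
    proof (rule differentiable_sum, simp, rule ballI)
      fix j
      have "(\<lambda>e. partial j (\<phi> a) (\<psi> e)) differentiable at e"
        by (rule chain(2)) (use psi_d phi_d2 psi_in e in blast)+
      thus "(\<lambda>e. partial j (\<phi> a) (\<psi> e) * partial i (\<lambda>y. \<psi> y $ j) e) differentiable at e"
        using psi_d2[OF e] by (rule differentiable_mult)
    qed
    thus "partial i (G a) differentiable at e"
      by (rule differentiable_transform_open[OF _ eta_open e]) (simp add: G1)
  qed
  have phi1: "\<And>a l y. y \<in> \<Theta> \<Longrightarrow> partial l (\<phi> a) y =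
      (\<Sum>i\<in>UNIV. partial i (G a) (\<eta> y) * partial l (\<lambda>y. \<eta> y $ i) y)"
  proof -
    fix a l y assume y: "y \<in> \<Theta>"
    have "partial l (\<phi> a) y = partial l (\<lambda>y. G a (\<eta> y)) y"
      by (rule partial_local[OF Theta_open y]) (simp add: G_def \<phi>_def psi_eta)
    also have "\<dots> = (\<Sum>i\<in>UNIV. partial i (G a) (\<eta> y) * partial l (\<lambda>y. \<eta> y $ i) y)"
      by (rule partial_eqI[OF chain(1)]) (use y eta_d G_d in auto)
    finally show "?thesis a l y" .
  qed
  have phi2: "\<And>a k l y. y \<in> \<Theta> \<Longrightarrow> partial k (partial l (\<phi> a)) y =
      (\<Sum>i\<in>UNIV. (\<Sum>j\<in>UNIV. partial j (partial i (G a)) (\<eta> y) * partial k (\<lambda>y. \<eta> y $ j) y)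
          * partial l (\<lambda>y. \<eta> y $ i) y
        + partial i (G a) (\<eta> y) * partial k (partial l (\<lambda>y. \<eta> y $ i)) y)" (is "\<And>a k l y. _ \<Longrightarrow> _ = ?R a k l y")
  proof -
    fix a k l y assume y: "y \<in> \<Theta>"
    have "partial k (partial l (\<phi> a)) y = partial k (\<lambda>y. \<Sum>i\<in>UNIV. partial i (G a) (\<eta> y) * partial l (\<lambda>y. \<eta> y $ i) y) y"
      by (rule partial_local[OF Theta_open y]) (simp add: phi1)
    also have "\<dots> = ?R a k l y"
    proof (rule partial_eqI, rule DERIV_sum)
      fix i
      have "((\<lambda>t. partial i (G a) (\<eta> (y + t *\<^sub>R axis k 1)) * partial l (\<lambda>y. \<eta> y $ i) (y + t *\<^sub>R axis k 1))
         has_real_derivative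
        (\<Sum>j\<in>UNIV. partial j (partial i (G a)) (\<eta> y) * partial k (\<lambda>y. \<eta> y $ j) y) * partial l (\<lambda>y. \<eta> y $ i) (y + 0 *\<^sub>R axis k 1)
        + partial k (partial l (\<lambda>y. \<eta> y $ i)) y * partial i (G a) (\<eta> (y + 0 *\<^sub>R axis k 1))) (at 0)"
        by (rule DERIV_mult[OF chain(1) line_deriv]) (use y eta_d G1_d eta_d2 in auto)
      thus "((\<lambda>t. partial i (G a) (\<eta> (y + t *\<^sub>R axis k 1)) * partial l (\<lambda>y. \<eta> y $ i) (y + t *\<^sub>R axis k 1))
         has_real_derivative
        (\<Sum>j\<in>UNIV. partial j (partial i (G a)) (\<eta> y) * partial k (\<lambda>y. \<eta> y $ j) y) * partial l (\<lambda>y. \<eta> y $ i) y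
        + partial i (G a) (\<eta> y) * partial k (partial l (\<lambda>y. \<eta> y $ i)) y) (at 0)"
        by (simp add: mult.commute)
    qed
    finally show "partial k (partial l (\<phi> a)) y = ?R a k l y" .
  qed
  have LD: "\<And>x j y. y \<in> \<Theta> \<Longrightarrow> ((\<lambda>t. bregman_div F f m x (y + t *\<^sub>R axis j 1)) has_real_derivative
      - (\<Sum>a\<in>UNIV. (x a - m y a) * partial j (\<phi> a) y)) (at 0)"
  proof -
    fix x j y assume y: "y \<in> \<Theta>"
    have "((\<lambda>t. \<Sum>a\<in>UNIV. F (x a) - F (m (y + t *\<^sub>R axis j 1) a) - (x a - m (y + t *\<^sub>R axis j 1) a) * f (m (y + t *\<^sub>R axis j 1) a))
       has_real_derivative (\<Sum>a\<in>UNIV. 0 - f (m y a) * partial j (\<lambda>\<theta>. m \<theta> a) y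
           - ((0 - partial j (\<lambda>\<theta>. m \<theta> a) y) * f (m y a) + partial j (\<phi> a) y * (x a - m y a)))) (at 0)"
    proof (rule DERIV_sum)
      fix a
      have dF: "((\<lambda>t. F (m (y + t *\<^sub>R axis j 1) a)) has_real_derivative f (m y a) * partial j (\<lambda>\<theta>. m \<theta> a) y) (at 0)"
        using comp_within[OF F_deriv Theta_open y, of "\<lambda>\<theta>. m \<theta> a" j] m_range m_d y by simp
      have dm: "((\<lambda>t. m (y + t *\<^sub>R axis j 1) a) has_real_derivative partial j (\<lambda>\<theta>. m \<theta> a) y) (at 0)"
        using line_deriv[OF m_d[OF y]] by simp
      have dphi: "((\<lambda>t. f (m (y + t *\<^sub>R axis j 1) a)) has_real_derivative partial j (\<phi> a) y) (at 0)"
        using line_deriv[OF phi_d[OF y]] by (simp add: \<phi>_def)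
      have "((\<lambda>t. F (x a) - F (m (y + t *\<^sub>R axis j 1) a) - (x a - m (y + t *\<^sub>R axis j 1) a) * f (m (y + t *\<^sub>R axis j 1) a))
       has_real_derivative 0 - f (m y a) * partial j (\<lambda>\<theta>. m \<theta> a) y
           - ((0 - partial j (\<lambda>\<theta>. m \<theta> a) y) * f (m (y + 0 *\<^sub>R axis j 1) a) + partial j (\<phi> a) y * (x a - m (y + 0 *\<^sub>R axis j 1) a))) (at 0)"
        by (intro DERIV_diff DERIV_mult DERIV_const dF dm dphi)
      thus "((\<lambda>t. F (x a) - F (m (y + t *\<^sub>R axis j 1) a) - (x a - m (y + t *\<^sub>R axis j 1) a) * f (m (y + t *\<^sub>R axis j 1) a))
       has_real_derivative 0 - f (m y a) * partial j (\<lambda>\<theta>. m \<theta> a) y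
           - ((0 - partial j (\<lambda>\<theta>. m \<theta> a) y) * f (m y a) + partial j (\<phi> a) y * (x a - m y a))) (at 0)"
        by simp
    qed
    moreover have "(\<Sum>a\<in>UNIV. 0 - f (m y a) * partial j (\<lambda>\<theta>. m \<theta> a) y
           - ((0 - partial j (\<lambda>\<theta>. m \<theta> a) y) * f (m y a) + partial j (\<phi> a) y * (x a - m y a)))
         = - (\<Sum>a\<in>UNIV. (x a - m y a) * partial j (\<phi> a) y)"
      by (simp add: sum_negf[symmetric] algebra_simps)
    ultimately show "?thesis x j y" by (simp add: bregman_div_def)
  qed
  have C0: "\<And>\<theta> x. \<theta> \<in> \<Theta> \<Longrightarrow> x \<in> fiber F f m \<Theta> \<theta> \<Longrightarrow> x \<in> prob_simplex \<and> min_param F f m \<Theta> x = \<theta>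
       \<and> (\<forall>\<theta>'\<in>\<Theta>. bregman_div F f m x \<theta> \<le> bregman_div F f m x \<theta>')"
  proof -
    fix \<theta> x assume th: "\<theta> \<in> \<Theta>" and x: "x \<in> fiber F f m \<Theta> \<theta>"
    hence xs: "x \<in> prob_simplex" and mm: "m (min_param F f m \<Theta> x) = m \<theta>" by (auto simp: fiber_def)
    have P: "min_param F f m \<Theta> x \<in> \<Theta> \<and> (\<forall>\<theta>'\<in>\<Theta>. bregman_div F f m x (min_param F f m \<Theta> x) \<le> bregman_div F f m x \<theta>')"
      unfolding min_param_def by (rule theI') (use unique_min xs in blast)
    have "min_param F f m \<Theta> x = \<theta>" using m_inj P mm th by (auto simp: inj_on_def)
    thus "?thesis \<theta> x" using P xs by simp
  qed
  have Stat: "\<And>\<theta> x j. \<theta> \<in> \<Theta> \<Longrightarrow> x \<in> fiber F f m \<Theta> \<theta> \<Longrightarrow> (\<Sum>a\<in>UNIV. (x a - m \<theta> a) * partial j (\<phi> a) \<theta>) = 0"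
  proof -
    fix \<theta> x j assume th: "\<theta> \<in> \<Theta>" and x: "x \<in> fiber F f m \<Theta> \<theta>"
    have mn: "\<forall>\<theta>'\<in>\<Theta>. bregman_div F f m x \<theta> \<le> bregman_div F f m x \<theta>'" using C0[OF th x] by blast
    obtain e where e: "e > 0" "ball 0 e \<subseteq> {t. \<theta> + t *\<^sub>R axis j 1 \<in> \<Theta>}"
      using openE[OF open_line[OF Theta_open, of \<theta> j], of 0] th by auto
    have "- (\<Sum>a\<in>UNIV. (x a - m \<theta> a) * partial j (\<phi> a) \<theta>) = 0"
    proof (rule DERIV_local_min[OF LD[OF th] e(1)], intro allI impI)
      fix t :: real assume "\<bar>0 - t\<bar> < e"
      hence "\<theta> + t *\<^sub>R axis j 1 \<in> \<Theta>" using e(2) by (auto simp: subset_iff dist_real_def)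
      thus "bregman_div F f m x (\<theta> + 0 *\<^sub>R axis j 1) \<le> bregman_div F f m x (\<theta> + t *\<^sub>R axis j 1)"
        using mn by simp
    qed
    thus "?thesis \<theta> x j" by simp
  qed
  have sumz: "\<And>\<theta> x. \<theta> \<in> \<Theta> \<Longrightarrow> x \<in> fiber F f m \<Theta> \<theta> \<Longrightarrow> (\<Sum>a\<in>UNIV. x a - m \<theta> a) = 0"
  proof -
    fix \<theta> x assume th: "\<theta> \<in> \<Theta>" and x: "x \<in> fiber F f m \<Theta> \<theta>"
    have "x \<in> prob_simplex" "m \<theta> \<in> prob_simplex" using C0[OF th x] m_in th by auto
    thus "?thesis \<theta> x" by (simp add: sum_subtractf prob_simplex_def)
  qed
  have Cl1: "\<And>\<theta> x k l. \<theta> \<in> \<Theta> \<Longrightarrow> x \<in> fiber F f m \<Theta> \<theta> \<Longrightarrow>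
      (\<Sum>a\<in>UNIV. (x a - m \<theta> a) * partial k (partial l (\<phi> a)) \<theta>) = 0"
  proof -
    fix \<theta> x k l assume th: "\<theta> \<in> \<Theta>" and x: "x \<in> fiber F f m \<Theta> \<theta>"
    obtain a0 :: 'a where True by simp
    define C where "C j i = partial j (partial i (G a0)) (\<eta> \<theta>)" for j i
    have CC: "partial j (partial i (G a)) (\<eta> \<theta>) = C j i" for a j i
    proof -
      from indep th obtain c where "\<forall>a. partial j (partial i (\<lambda>e. f (m (\<psi> e) a))) (\<eta> \<theta>) = c" by blast
      thus ?thesis unfolding C_def G_def by simp
    qed
    have eth: "\<eta> \<theta> \<in> \<eta> ` \<Theta>" using th by simp
    have G1': "partial i (G a) (\<eta> \<theta>) = (\<Sum>j\<in>UNIV. partial j (\<phi> a) \<theta> * partial i (\<lambda>y. \<psi> y $ j) (\<eta> \<theta>))" for a i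
      using G1[OF eth] psi_eta th by simp
    define K where "K j = partial k (\<lambda>y. \<eta> y $ j) \<theta>" for j
    define L where "L i = partial l (\<lambda>y. \<eta> y $ i) \<theta>" for i
    define M where "M i = partial k (partial l (\<lambda>y. \<eta> y $ i)) \<theta>" for i
    define P where "P a j = partial j (\<phi> a) \<theta>" for a j
    define Q where "Q i j = partial i (\<lambda>y. \<psi> y $ j) (\<eta> \<theta>)" for i j
    define d where "d a = x a - m \<theta> a" for a
    have "(\<Sum>a\<in>UNIV. (x a - m \<theta> a) * partial k (partial l (\<phi> a)) \<theta>)
        = (\<Sum>a\<in>UNIV. d a * (\<Sum>i\<in>UNIV. (\<Sum>j\<in>UNIV. C j i * K j) * L i + (\<Sum>j\<in>UNIV. P a j * Q i j) * M i))"
      using phi2[OF th] by (simp add: CC G1' K_def L_def M_def P_def Q_def d_def)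
    also have "\<dots> = (\<Sum>a\<in>UNIV. d a * (\<Sum>i\<in>UNIV. (\<Sum>j\<in>UNIV. C j i * K j) * L i))
        + (\<Sum>a\<in>UNIV. d a * (\<Sum>i\<in>UNIV. (\<Sum>j\<in>UNIV. P a j * Q i j) * M i))"
      by (simp add: sum.distrib distrib_left)
    also have "(\<Sum>a\<in>UNIV. d a * (\<Sum>i\<in>UNIV. (\<Sum>j\<in>UNIV. C j i * K j) * L i))
        = (\<Sum>a\<in>UNIV. d a) * (\<Sum>i\<in>UNIV. (\<Sum>j\<in>UNIV. C j i * K j) * L i)"
      by (rule sum_distrib_right[symmetric])
    also have "(\<Sum>a\<in>UNIV. d a * (\<Sum>i\<in>UNIV. (\<Sum>j\<in>UNIV. P a j * Q i j) * M i))
        = (\<Sum>a\<in>UNIV. \<Sum>i\<in>UNIV. \<Sum>j\<in>UNIV. d a * P a j * Q i j * M i)"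
      by (simp only: sum_distrib_left sum_distrib_right mult.assoc)
    also have "\<dots> = (\<Sum>i\<in>UNIV. \<Sum>a\<in>UNIV. \<Sum>j\<in>UNIV. d a * P a j * Q i j * M i)"
      by (rule sum.swap)
    also have "\<dots> = (\<Sum>i\<in>UNIV. \<Sum>j\<in>UNIV. \<Sum>a\<in>UNIV. d a * P a j * Q i j * M i)"
      by (rule sum.cong[OF refl], rule sum.swap)
    also have "\<dots> = (\<Sum>i\<in>UNIV. \<Sum>j\<in>UNIV. Q i j * M i * (\<Sum>a\<in>UNIV. d a * P a j))"
      by (intro sum.cong refl) (simp add: sum_distrib_left mult_ac)
    also have "\<dots> = 0" using Stat[OF th x] by (simp add: d_def P_def)
    finally show "?thesis \<theta> x k l" using sumz[OF th x] by (simp add: d_def)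
  qed
  have Cl3: "\<And>\<theta> x k l. \<theta> \<in> \<Theta> \<Longrightarrow> x \<in> fiber F f m \<Theta> \<theta> \<Longrightarrow> fisher_info F f m \<Theta> k l x =
      (\<Sum>a\<in>UNIV. f' (m \<theta> a) * partial k (\<lambda>\<theta>. m \<theta> a) \<theta> * partial l (\<lambda>\<theta>. m \<theta> a) \<theta>)"
  proof -
    fix \<theta> x k l assume th: "\<theta> \<in> \<Theta>" and x: "x \<in> fiber F f m \<Theta> \<theta>"
    have "fisher_info F f m \<Theta> k l x = partial k (partial l (bregman_div F f m x)) \<theta>"
      using C0[OF th x] by (simp add: fisher_info_def)
    also have "\<dots> = partial k (\<lambda>y. - (\<Sum>a\<in>UNIV. (x a - m y a) * partial l (\<phi> a) y)) \<theta>"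
      by (rule partial_local[OF Theta_open th]) (rule partial_eqI[OF LD])
    also have "\<dots> = - (\<Sum>a\<in>UNIV. (0 - partial k (\<lambda>\<theta>. m \<theta> a) \<theta>) * partial l (\<phi> a) \<theta>
                 + partial k (partial l (\<phi> a)) \<theta> * (x a - m \<theta> a))"
    proof (rule partial_eqI, rule DERIV_minus, rule DERIV_sum)
      fix a
      have "((\<lambda>t. (x a - m (\<theta> + t *\<^sub>R axis k 1) a) * partial l (\<phi> a) (\<theta> + t *\<^sub>R axis k 1)) has_real_derivative
          (0 - partial k (\<lambda>\<theta>. m \<theta> a) \<theta>) * partial l (\<phi> a) (\<theta> + 0 *\<^sub>R axis k 1)
                 + partial k (partial l (\<phi> a)) \<theta> * (x a - m (\<theta> + 0 *\<^sub>R axis k 1) a)) (at 0)"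
        by (intro DERIV_mult DERIV_diff DERIV_const line_deriv[OF m_d[OF th], simplified]
              line_deriv[OF phi_d2[OF th]])
      thus "((\<lambda>t. (x a - m (\<theta> + t *\<^sub>R axis k 1) a) * partial l (\<phi> a) (\<theta> + t *\<^sub>R axis k 1)) has_real_derivative
          (0 - partial k (\<lambda>\<theta>. m \<theta> a) \<theta>) * partial l (\<phi> a) \<theta>
                 + partial k (partial l (\<phi> a)) \<theta> * (x a - m \<theta> a)) (at 0)" by simp
    qed
    also have "\<dots> = (\<Sum>a\<in>UNIV. partial k (\<lambda>\<theta>. m \<theta> a) \<theta> * partial l (\<phi> a) \<theta>)
        - (\<Sum>a\<in>UNIV. (x a - m \<theta> a) * partial k (partial l (\<phi> a)) \<theta>)"
      by (simp add: sum_negf[symmetric] sum_subtractf[symmetric] algebra_simps)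
    also have "\<dots> = (\<Sum>a\<in>UNIV. partial k (\<lambda>\<theta>. m \<theta> a) \<theta> * partial l (\<phi> a) \<theta>)"
      using Cl1[OF th x] by simp
    also have "\<dots> = (\<Sum>a\<in>UNIV. f' (m \<theta> a) * partial k (\<lambda>\<theta>. m \<theta> a) \<theta> * partial l (\<lambda>\<theta>. m \<theta> a) \<theta>)"
    proof (rule sum.cong[OF refl])
      fix a
      have "partial l (\<phi> a) \<theta> = f' (m \<theta> a) * partial l (\<lambda>\<theta>. m \<theta> a) \<theta>"
        using partial_eqI[OF comp_within[OF f_deriv Theta_open th, of "\<lambda>\<theta>. m \<theta> a" l]] m_range m_d th
        by (simp add: \<phi>_def)
      thus "partial k (\<lambda>\<theta>. m \<theta> a) \<theta> * partial l (\<phi> a) \<theta> =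
          f' (m \<theta> a) * partial k (\<lambda>\<theta>. m \<theta> a) \<theta> * partial l (\<lambda>\<theta>. m \<theta> a) \<theta>" by simp
    qed
    finally show "?thesis \<theta> x k l" .
  qed
  have Cl2: "gen_exp_family F f m \<Theta>"
    unfolding gen_exp_family_def
  proof (intro ballI allI)
    fix \<theta> k l x y assume th: "\<theta> \<in> \<Theta>" and x: "x \<in> fiber F f m \<Theta> \<theta>" and y: "y \<in> fiber F f m \<Theta> \<theta>"
    show "fisher_info F f m \<Theta> k l x = fisher_info F f m \<Theta> k l y"
      by (simp only: Cl3[OF th x] Cl3[OF th y])
  qed
  have Cl1': "\<forall>\<theta>\<in>\<Theta>. \<forall>x\<in>fiber F f m \<Theta> \<theta>. \<forall>k l.
            (\<Sum>a\<in>UNIV. (x a - m \<theta> a) * partial k (partial l (\<lambda>\<theta>. f (m \<theta> a))) \<theta>) = 0"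
    using Cl1 unfolding \<phi>_def by blast
  show ?thesis using Cl1' Cl2 Cl3 by blast
qed

end
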